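(* For each $n\ge p$ let $\mathbf Y=\mathbf X\boldsymbol\beta^0+\boldsymbol\epsilon$ with $\boldsymbol\epsilon\sim N_n(\mathbf 0,\sigma^2\mathbf I_n)$, $\sigma>0$ fixed, where the $n\times p$ design $\mathbf X=\mathbf X^{(n)}$ satisfies $\mathbf X^T\mathbf X=n\mathbf I_p$, and the coefficient vector $\boldsymbol\beta^0=(\boldsymbol\beta_1^{0},\dots,\boldsymbol\beta_G^{0})$ (blocks of fixed sizes $m_g$, $p=\sum_g m_g$) does not depend on $n$. Assume at least one group has $\boldsymbol\beta_g^0=\mathbf 0$. Let $\hat{\boldsymbol\beta}^{LS}=\mathbf X^T\mathbf Y/n$ and define the group lasso estimator blockwise by $\hat{\boldsymbol\beta}^{GL}_g=\big(1-\frac{\lambda_n}{n\|\hat{\boldsymbol\beta}^{LS}_g\|_2}\big)_+\hat{\boldsymbol\beta}^{LS}_g$. If $\lambda_n/\sqrt n\to\lambda_0$ for some $\lambda_0\in[0,\infty)$, then $\limsup_{n\to\infty}P(\mathcal A_n^{GL}=\mathcal A)<1$. *)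

theory Defs
  imports "HOL-Probability.Probability"
begin

definition block :: "(nat \<Rightarrow> nat) \<Rightarrow> nat \<Rightarrow> nat set" where
  "block m g = {(\<Sum>h<g. m h)..<(\<Sum>h<Suc g. m h)}"

definition block_norm :: "(nat \<Rightarrow> nat) \<Rightarrow> (nat \<Rightarrow> real) \<Rightarrow> nat \<Rightarrow> real" where
  "block_norm m b g = sqrt (\<Sum>j\<in>block m g. (b j)^2)"

definition ls_est :: "(nat \<Rightarrow> nat \<Rightarrow> real) \<Rightarrow> nat \<Rightarrow> (nat \<Rightarrow> real) \<Rightarrow> nat \<Rightarrow> real" where
  "ls_est Xn n Y j = (\<Sum>i<n. Xn i j * Y i) / real n"

definition gl_block :: "(nat \<Rightarrow> nat) \<Rightarrow> real \<Rightarrow> nat \<Rightarrow> (nat \<Rightarrow> real) \<Rightarrow> nat \<Rightarrow> nat \<Rightarrow> real" where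
  "gl_block m lam n b g j =
     (if j \<in> block m g then max 0 (1 - lam / (real n * block_norm m b g)) * b j else 0)"

definition gl_active :: "nat \<Rightarrow> (nat \<Rightarrow> nat) \<Rightarrow> real \<Rightarrow> nat \<Rightarrow> (nat \<Rightarrow> real) \<Rightarrow> nat set" where
  "gl_active G m lam n b = {g. g < G \<and> gl_block m lam n b g \<noteq> (\<lambda>_. 0)}"

definition true_active :: "nat \<Rightarrow> (nat \<Rightarrow> nat) \<Rightarrow> (nat \<Rightarrow> real) \<Rightarrow> nat set" where
  "true_active G m \<beta> = {g. g < G \<and> (\<exists>j\<in>block m g. \<beta> j \<noteq> 0)}"

definition noise_space :: "nat \<Rightarrow> real \<Rightarrow> (nat \<Rightarrow> real) measure" where
  "noise_space n \<sigma> = PiM {..<n} (\<lambda>_. density lborel (normal_density 0 \<sigma>))"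

end

theory Submission
  imports Defs
begin

lemma pn: "\<sigma> > 0 \<Longrightarrow> prob_space (density lborel (normal_density \<mu> \<sigma>))"
  by (rule prob_space_normal_density)

lemma noise_prob: "\<sigma> > 0 \<Longrightarrow> prob_space (noise_space n \<sigma>)"
  unfolding noise_space_def
  by (intro prob_space_PiM pn)

lemma noise_pps: "\<sigma> > 0 \<Longrightarrow> product_prob_space (\<lambda>_::nat. density lborel (normal_density 0 \<sigma>))"
  using pn[of \<sigma> 0]
  by (simp add: product_prob_space_def product_sigma_finite_def 
       prob_space_imp_sigma_finite product_prob_space_axioms_def)

lemma noise_comp:
  assumes "i < n" "\<sigma> > 0"
  shows "distributed (noise_space n \<sigma>) lborel (\<lambda>\<omega>. \<omega> i) (normal_density 0 \<sigma>)"
proof -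
  interpret P: product_prob_space "\<lambda>_. density lborel (normal_density 0 \<sigma>)" "{..<n}"
    using noise_pps assms by blast
  have "distr (noise_space n \<sigma>) lborel (\<lambda>\<omega>. \<omega> i) = distr (noise_space n \<sigma>) (density lborel (normal_density 0 \<sigma>)) (\<lambda>\<omega>. \<omega> i)"
    by (rule distr_cong) auto
  also have "\<dots> = density lborel (normal_density 0 \<sigma>)"
    unfolding noise_space_def using P.PiM_component[of i] assms by simp
  finally show ?thesis unfolding distributed_def noise_space_def
    using assms by (auto intro!: measurable_component_singleton)
qed

lemma noise_indep:
  assumes "0 < n" "\<sigma> > 0"
  shows "prob_space.indep_vars (noise_space n \<sigma>) (\<lambda>_. borel) (\<lambda>i \<omega>. \<omega> i) {..<n}"
proof -
  interpret P: product_prob_space "\<lambda>_. density lborel (normal_density 0 \<sigma>)" "{..<n}"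
    using noise_pps assms by blast
  interpret M: prob_space "noise_space n \<sigma>" using noise_prob assms by blast
  have rv: "(\<lambda>\<omega>. \<omega> i) \<in> measurable (noise_space n \<sigma>) (borel :: real measure)" if "i \<in> {..<n}" for i
    using that unfolding noise_space_def 
    by (auto intro!: measurable_component_singleton)
  have "distr (noise_space n \<sigma>) (\<Pi>\<^sub>M i\<in>{..<n}. borel) (\<lambda>x. \<lambda>i\<in>{..<n}. x i) =
        distr (noise_space n \<sigma>) (noise_space n \<sigma>) (\<lambda>x. x)"
    by (rule distr_cong) (auto simp: noise_space_def space_PiM PiE_def extensional_restrict intro!: sets_PiM_cong)
  also have "\<dots> = noise_space n \<sigma>" by simp
  also have "\<dots> = (\<Pi>\<^sub>M i\<in>{..<n}. distr (noise_space n \<sigma>) borel (\<lambda>\<omega>. \<omega> i))"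
    unfolding noise_space_def
  proof (rule PiM_cong)
    fix i assume i: "i \<in> {..<n}"
    have "distr (PiM {..<n} (\<lambda>_. density lborel (normal_density 0 \<sigma>))) borel (\<lambda>\<omega>. \<omega> i)
       = distr (PiM {..<n} (\<lambda>_. density lborel (normal_density 0 \<sigma>))) (density lborel (normal_density 0 \<sigma>)) (\<lambda>\<omega>. \<omega> i)"
      by (rule distr_cong) auto
    then show "density lborel (normal_density 0 \<sigma>) = distr (PiM {..<n} (\<lambda>_. density lborel (normal_density 0 \<sigma>))) borel (\<lambda>\<omega>. \<omega> i)"
      using P.PiM_component[OF i] by simp
  qed simp
  finally show ?thesis
    using M.indep_vars_iff_distr_eq_PiM'[where I="{..<n}" and M'="\<lambda>_. borel" and X="\<lambda>i \<omega>. \<omega> i"] assms rv by auto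
qed

lemma noise_lin:
  assumes sp: "\<sigma> > 0" and pos: "(\<Sum>i<n. (a i)^2) > 0"
  shows "distributed (noise_space n \<sigma>) lborel (\<lambda>\<omega>. \<Sum>i<n. a i * \<omega> i)
           (normal_density 0 (\<sigma> * sqrt (\<Sum>i<n. (a i)^2)))"
proof -
  interpret M: prob_space "noise_space n \<sigma>" using noise_prob sp by blast
  define I where "I = {i. i < n \<and> a i \<noteq> 0}"
  have fin: "finite I" unfolding I_def by auto
  have sI: "(\<Sum>i\<in>I. f i) = (\<Sum>i<n. f i)" if "\<And>i. a i = 0 \<Longrightarrow> f i = 0" for f :: "nat \<Rightarrow> real"
    by (rule sum.mono_neutral_left) (auto simp: I_def that)
  have ne: "I \<noteq> {}"
  proof
    assume "I = {}"
    then have "(\<Sum>i<n. (a i)^2) = 0" using sI[of "\<lambda>i. (a i)^2"] by simp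
    with pos show False by simp
  qed
  then have n0: "0 < n" unfolding I_def by auto
  have ind: "M.indep_vars (\<lambda>_. borel) (\<lambda>i \<omega>. a i * \<omega> i) I"
    by (rule M.indep_vars_compose2[OF M.indep_vars_subset[OF noise_indep[OF n0 sp]]])
       (auto simp: I_def)
  have dist: "distributed (noise_space n \<sigma>) lborel (\<lambda>\<omega>. a i * \<omega> i) (normal_density 0 (\<bar>a i\<bar> * \<sigma>))"
    if "i \<in> I" for i
    using M.normal_density_affine[OF noise_comp[of i n \<sigma>] sp, of "a i" 0] that sp
    by (simp add: I_def)
  have "distributed (noise_space n \<sigma>) lborel (\<lambda>\<omega>. \<Sum>i\<in>I. a i * \<omega> i)
          (normal_density (\<Sum>i\<in>I. 0) (sqrt (\<Sum>i\<in>I. (\<bar>a i\<bar> * \<sigma>)^2)))"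
    by (rule M.sum_indep_normal[OF fin ne ind]) (use dist sp in \<open>auto simp: I_def\<close>)
  moreover have "(\<lambda>\<omega>. \<Sum>i\<in>I. a i * \<omega> i) = (\<lambda>\<omega>. \<Sum>i<n. a i * \<omega> i)"
    using sI by auto
  moreover have "sqrt (\<Sum>i\<in>I. (\<bar>a i\<bar> * \<sigma>)^2) = \<sigma> * sqrt (\<Sum>i<n. (a i)^2)"
  proof -
    have "(\<Sum>i\<in>I. (\<bar>a i\<bar> * \<sigma>)^2) = \<sigma>^2 * (\<Sum>i<n. (a i)^2)"
      using sI[of "\<lambda>i. (\<bar>a i\<bar> * \<sigma>)^2"] by (simp add: power_mult_distrib sum_distrib_left mult.commute)
    then show ?thesis using sp by (simp add: real_sqrt_mult)
  qed
  ultimately show ?thesis by simp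
qed

lemma std_tail_pos: "emeasure (density lborel (normal_density 0 1)) {C<..} \<noteq> 0"
proof
  assume "emeasure (density lborel (normal_density 0 1)) {C<..} = 0"
  then have "(\<integral>\<^sup>+x. ennreal (normal_density 0 1 x) * indicator {C<..} x \<partial>lborel) = 0"
    by (simp add: emeasure_density)
  then have "AE x in lborel. ennreal (normal_density 0 1 x) * indicator {C<..} x = 0"
    by (subst (asm) nn_integral_0_iff_AE) auto
  then have "AE x in lborel. x \<notin> {C<..C+1}"
  proof (eventually_elim)
    case (elim x)
    show ?case
    proof
      assume "x \<in> {C<..C+1}"
      with elim have "ennreal (normal_density 0 1 x) = 0" by (simp add: indicator_def)
      then have "normal_density 0 1 x \<le> 0" by (simp add: ennreal_eq_0_iff)
      with normal_density_pos[of 1 0 x] show False by simp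
    qed
  qed
  then have "emeasure lborel {C<..C+1} = 0"
    by (subst (asm) AE_iff_measurable[where N="{C<..C+1}"]) auto
  then show False by simp
qed

lemma std_q_lt1: "measure (density lborel (normal_density 0 1)) {-C..C} < 1"
proof -
  let ?Q = "density lborel (normal_density 0 1)"
  interpret Q: prob_space ?Q by (rule pn) simp
  have "measure ?Q {C<..} > 0"
    using std_tail_pos[of C] by (simp add: Q.emeasure_eq_measure zero_less_measure_iff)
  moreover have "measure ?Q ({-C..C} \<union> {C<..}) = measure ?Q {-C..C} + measure ?Q {C<..}"
    by (rule Q.finite_measure_Union) auto
  moreover have "measure ?Q ({-C..C} \<union> {C<..}) \<le> 1" by (rule Q.prob_le_1)
  ultimately show ?thesis by linarith
qed

lemma prob_abs_le:
  assumes "prob_space M" "distributed M lborel Z (normal_density 0 1)" "c \<le> C"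
  shows "measure M {x\<in>space M. \<bar>Z x\<bar> \<le> c} \<le> measure (density lborel (normal_density 0 1)) {-C..C}"
proof -
  let ?Q = "density lborel (normal_density 0 1)"
  interpret Q: prob_space ?Q by (rule pn) simp
  have Zm: "Z \<in> borel_measurable M" using assms(2) by (auto simp: distributed_def)
  have "measure M {x\<in>space M. \<bar>Z x\<bar> \<le> c} = measure (distr M lborel Z) {-c..c}"
    by (subst measure_distr) (use Zm in \<open>auto intro!: arg_cong[where f="measure M"]\<close>)
  also have "\<dots> = measure ?Q {-c..c}" using assms(2) by (simp add: distributed_def)
  also have "\<dots> \<le> measure ?Q {-C..C}"
    by (rule Q.finite_measure_mono) (use assms in auto)
  finally show ?thesis .
qed

lemma gl_zero_bound:
  assumes "gl_block m lam n b g = (\<lambda>_. 0)" "j \<in> block m g" "n > 0" "lam \<ge> 0"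
  shows "\<bar>b j\<bar> \<le> lam / real n"
proof (cases "b j = 0")
  case True then show ?thesis using assms by simp
next
  case False
  let ?N = "block_norm m b g"
  have fin: "finite (block m g)" by (simp add: block_def)
  have "(b j)^2 \<le> (\<Sum>i\<in>block m g. (b i)^2)"
    by (rule member_le_sum) (use assms fin in auto)
  then have bN: "\<bar>b j\<bar> \<le> ?N" unfolding block_norm_def
    using real_sqrt_le_mono by fastforce
  have "gl_block m lam n b g j = 0" using assms(1) by simp
  then have "max 0 (1 - lam / (real n * ?N)) = 0" using False assms(2) by (simp add: gl_block_def)
  then have h: "1 \<le> lam / (real n * ?N)" by linarith
  have Np: "?N > 0" using bN False by linarith
  then have "real n * ?N \<le> lam" using h assms(3) by (simp add: le_divide_eq)
  then have "?N \<le> lam / real n" using assms(3) by (simp add: le_divide_eq mult.commute)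
  with bN show ?thesis by linarith
qed

theorem mainTheorem3:
  fixes G p :: nat and m :: "nat \<Rightarrow> nat" and X :: "nat \<Rightarrow> nat \<Rightarrow> nat \<Rightarrow> real"
    and \<beta>0 :: "nat \<Rightarrow> real" and \<sigma> lam0 :: real and lam :: "nat \<Rightarrow> real"
  assumes "\<forall>g<G. m g > 0"
    and "p = (\<Sum>g<G. m g)"
    and "\<sigma> > 0"
    and "\<forall>n\<ge>p. \<forall>j<p. \<forall>k<p. (\<Sum>i<n. X n i j * X n i k) = (if j = k then real n else 0)"
    and "\<exists>g<G. \<forall>j\<in>block m g. \<beta>0 j = 0"
    and "\<forall>n. lam n \<ge> 0"
    and "(\<lambda>n. lam n / sqrt (real n)) \<longlonglongrightarrow> lam0"
    and "lam0 \<ge> 0"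
  shows "limsup (\<lambda>n. ereal (measure (noise_space n \<sigma>)
           {\<epsilon> \<in> space (noise_space n \<sigma>).
              gl_active G m (lam n) n
                (ls_est (X n) n (\<lambda>i. (\<Sum>j<p. X n i j * \<beta>0 j) + \<epsilon> i))
              = true_active G m \<beta>0})) < 1"
proof -
  note A = assms
  obtain g0 where g0: "g0 < G" "\<forall>j\<in>block m g0. \<beta>0 j = 0" using A(5) by blast
  define j0 where "j0 = (\<Sum>h<g0. m h)"
  have mg0: "m g0 > 0" using A(1) g0 by auto
  have j0b: "j0 \<in> block m g0" unfolding block_def j0_def using mg0 by simp
  have "(\<Sum>h<Suc g0. m h) \<le> (\<Sum>h<G. m h)"
    by (rule sum_mono2) (use g0 in auto)
  then have j0p: "j0 < p" using j0b A(2) unfolding block_def by auto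
  have b0: "\<beta>0 j0 = 0" using g0 j0b by blast
  have g0n: "g0 \<notin> true_active G m \<beta>0" using g0 by (auto simp: true_active_def)
  define C where "C = (lam0 + 1) / \<sigma>"
  define q where "q = measure (density lborel (normal_density 0 1)) {-C..C}"
  have q1: "q < 1" unfolding q_def by (rule std_q_lt1)
  have ev1: "eventually (\<lambda>n. lam n / sqrt (real n) < lam0 + 1) sequentially"
    using order_tendstoD(2)[OF A(7)] by simp
  have ev2: "eventually (\<lambda>n. n \<ge> max p 1) sequentially" by (rule eventually_ge_at_top)
  have "eventually (\<lambda>n. ereal (measure (noise_space n \<sigma>)
           {\<epsilon> \<in> space (noise_space n \<sigma>).
              gl_active G m (lam n) n
                (ls_est (X n) n (\<lambda>i. (\<Sum>j<p. X n i j * \<beta>0 j) + \<epsilon> i))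
              = true_active G m \<beta>0}) \<le> ereal q) sequentially"
    using ev1 ev2
  proof eventually_elim
    case (elim n)
    have np: "n \<ge> p" and n0: "n > 0" using elim(2) by auto
    let ?M = "noise_space n \<sigma>"
    interpret M: prob_space ?M using noise_prob A(3) by blast
    define a where "a i = X n i j0" for i
    have orth: "(\<Sum>i<n. X n i j * X n i k) = (if j = k then real n else 0)" if "j < p" "k < p" for j k
      using A(4) np that by blast
    have sa: "(\<Sum>i<n. (a i)^2) = real n" using orth[OF j0p j0p] by (simp add: a_def power2_eq_square)
    define s where "s = \<sigma> * sqrt (real n)"
    have sp: "s > 0" using A(3) n0 by (simp add: s_def)
    define S where "S \<omega> = (\<Sum>i<n. a i * \<omega> i)" for \<omega> :: "nat \<Rightarrow> real"
    have dS: "distributed ?M lborel S (normal_density 0 s)"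
      using noise_lin[where \<sigma>=\<sigma> and n=n and a=a] A(3) n0 sa unfolding S_def s_def by simp
    have dZ: "distributed ?M lborel (\<lambda>\<omega>. 0 + (1/s) * S \<omega>) (normal_density (0 + (1/s) * 0) (\<bar>1/s\<bar> * s))"
      by (rule M.normal_density_affine[OF dS sp]) (use sp in simp)
    then have dZ': "distributed ?M lborel (\<lambda>\<omega>. S \<omega> / s) (normal_density 0 1)"
      using sp by simp
    have Sm: "S \<in> borel_measurable ?M" using dS by (auto simp: distributed_def)
    let ?E = "{\<epsilon> \<in> space ?M. gl_active G m (lam n) n
                (ls_est (X n) n (\<lambda>i. (\<Sum>j<p. X n i j * \<beta>0 j) + \<epsilon> i)) = true_active G m \<beta>0}"
    let ?F = "{\<omega> \<in> space ?M. \<bar>S \<omega> / s\<bar> \<le> lam n / s}"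
    have sub: "?E \<subseteq> ?F"
    proof
      fix \<epsilon> assume e: "\<epsilon> \<in> ?E"
      define b where "b = ls_est (X n) n (\<lambda>i. (\<Sum>j<p. X n i j * \<beta>0 j) + \<epsilon> i)"
      have "g0 \<notin> gl_active G m (lam n) n b" using e g0n by (simp add: b_def)
      then have gz: "gl_block m (lam n) n b g0 = (\<lambda>_. 0)" using g0 by (simp add: gl_active_def)
      have bb: "\<bar>b j0\<bar> \<le> lam n / real n" by (rule gl_zero_bound[OF gz j0b n0 A(6)[rule_format]])
      have "(\<Sum>i<n. a i * (\<Sum>j<p. X n i j * \<beta>0 j)) = (\<Sum>j<p. \<beta>0 j * (\<Sum>i<n. a i * X n i j))"
        by (simp add: sum_distrib_left sum_distrib_right mult_ac sum.swap[of _ "{..<n}"])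
      also have "\<dots> = (\<Sum>j<p. \<beta>0 j * (if j0 = j then real n else 0))"
        using orth j0p by (simp add: a_def)
      also have "\<dots> = 0" using b0 j0p by (simp add: if_distrib cong: if_cong)
      finally have z: "(\<Sum>i<n. a i * (\<Sum>j<p. X n i j * \<beta>0 j)) = 0" .
      have "b j0 = S \<epsilon> / real n"
        unfolding b_def ls_est_def S_def a_def[symmetric]
        using z by (simp add: distrib_left sum.distrib)
      then have "\<bar>S \<epsilon>\<bar> \<le> lam n" using bb n0 by (simp add: abs_divide divide_le_cancel)
      then show "\<epsilon> \<in> ?F" using e sp by (simp add: abs_divide divide_right_mono)
    qed
    have Fm: "?F \<in> sets ?M" using Sm by measurable
    have "measure ?M ?E \<le> measure ?M ?F" by (rule M.finite_measure_mono[OF sub Fm])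
    also have "\<dots> \<le> q" unfolding q_def
    proof (rule prob_abs_le[OF M.prob_space_axioms dZ'])
      have "lam n / s = (lam n / sqrt (real n)) / \<sigma>" by (simp add: s_def mult.commute)
      also have "\<dots> \<le> C" unfolding C_def using elim(1) A(3)
        by (intro divide_right_mono) auto
      finally show "lam n / s \<le> C" .
    qed
    finally show ?case by simp
  qed
  then have "limsup (\<lambda>n. ereal (measure (noise_space n \<sigma>)
           {\<epsilon> \<in> space (noise_space n \<sigma>).
              gl_active G m (lam n) n
                (ls_est (X n) n (\<lambda>i. (\<Sum>j<p. X n i j * \<beta>0 j) + \<epsilon> i))
              = true_active G m \<beta>0})) \<le> ereal q"
    by (rule Limsup_bounded)
  also have "\<dots> < 1" using q1 by simp
  finally show ?thesis .
qed

end
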